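(* Let $A$ be an associative unital algebra over a commutative ring $k$ and $B$ a subalgebra with $L(A)\subseteq B\subseteq\mathrm{End}_k(A)$ such that $A^B\subseteq Z(A)$ (the centre of $A$). Then $A$ is a critically compressible left $B$-module if and only if $A^B$ is an integral domain and large in $A$.
   Context: $L(A)=\{L_a:a\in A\}$, $L_a(x)=ax$; $A$ is a left $B$-module via $\varphi\cdot a=\varphi(a)$. $A^B=\{a\in A: b\cdot a=(b\cdot1)a\ \forall b\in B\}\cong\mathrm{End}_B(A)$. $A^B$ is large in $A$ if $A^B\cap I\neq 0$ for every nonzero $B$-stable left ideal $I$ of $A$. A nonzero module is critically compressible if it embeds into each of its nonzero submodules and into none of its factor modules $M/N$ with $N\neq0$. *)

theory Defs
  imports Main "HOL.Modules"
begin

text \<open>A is modelled by a type 'a of class ring_1 (associative unital ring);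
 the commutative base ring k is a type 'k of class comm_ring_1, acting on 'a via
 a scalar multiplication s making 'a a k-algebra.\<close>

definition k_algebra :: "('k::comm_ring_1 \<Rightarrow> 'a::ring_1 \<Rightarrow> 'a) \<Rightarrow> bool" where
  "k_algebra s \<longleftrightarrow> module s \<and>
     (\<forall>c x y. s c (x * y) = s c x * y \<and> s c (x * y) = x * s c y)"

definition End_k :: "('k::comm_ring_1 \<Rightarrow> 'a::ring_1 \<Rightarrow> 'a) \<Rightarrow> ('a \<Rightarrow> 'a) set" where
  "End_k s = {f. module_hom s s f}"

definition subalgebra_End :: "('k::comm_ring_1 \<Rightarrow> 'a::ring_1 \<Rightarrow> 'a) \<Rightarrow> ('a \<Rightarrow> 'a) set \<Rightarrow> bool" where
  "subalgebra_End s B \<longleftrightarrow> B \<subseteq> End_k s \<and> id \<in> B \<and> (\<lambda>x. 0) \<in> B \<and>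
     (\<forall>f\<in>B. \<forall>g\<in>B. (\<lambda>x. f x + g x) \<in> B \<and> f \<circ> g \<in> B) \<and>
     (\<forall>f\<in>B. (\<lambda>x. - f x) \<in> B) \<and>
     (\<forall>c. \<forall>f\<in>B. (\<lambda>x. s c (f x)) \<in> B)"

definition Lmaps :: "('a::ring_1 \<Rightarrow> 'a) set" where
  "Lmaps = range (\<lambda>a x. a * x)"

definition invariants :: "('a::ring_1 \<Rightarrow> 'a) set \<Rightarrow> 'a set" where
  "invariants B = {a. \<forall>\<phi>\<in>B. \<phi> a = \<phi> 1 * a}"

definition centre :: "'a::ring_1 set" where
  "centre = {z. \<forall>x. z * x = x * z}"

definition is_integral_domain :: "'a::ring_1 set \<Rightarrow> bool" where
  "is_integral_domain S \<longleftrightarrow>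
     0 \<in> S \<and> 1 \<in> S \<and> (\<forall>a\<in>S. \<forall>b\<in>S. a + b \<in> S \<and> a * b \<in> S) \<and> (\<forall>a\<in>S. - a \<in> S) \<and>
     (1::'a) \<noteq> 0 \<and> (\<forall>a\<in>S. \<forall>b\<in>S. a * b = b * a) \<and>
     (\<forall>a\<in>S. \<forall>b\<in>S. a * b = 0 \<longrightarrow> a = 0 \<or> b = 0)"

text \<open>B-submodules of the left B-module A (action \<phi>\<cdot>a = \<phi>(a)).\<close>
definition B_submodule :: "('a::ring_1 \<Rightarrow> 'a) set \<Rightarrow> 'a set \<Rightarrow> bool" where
  "B_submodule B N \<longleftrightarrow> 0 \<in> N \<and> (\<forall>x\<in>N. \<forall>y\<in>N. x + y \<in> N) \<and> (\<forall>x\<in>N. - x \<in> N) \<and>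
     (\<forall>\<phi>\<in>B. \<forall>x\<in>N. \<phi> x \<in> N)"

definition left_ideal :: "'a::ring_1 set \<Rightarrow> bool" where
  "left_ideal I \<longleftrightarrow> 0 \<in> I \<and> (\<forall>x\<in>I. \<forall>y\<in>I. x + y \<in> I) \<and> (\<forall>x\<in>I. - x \<in> I) \<and>
     (\<forall>a. \<forall>x\<in>I. a * x \<in> I)"

definition B_stable :: "('a \<Rightarrow> 'a) set \<Rightarrow> 'a set \<Rightarrow> bool" where
  "B_stable B I \<longleftrightarrow> (\<forall>\<phi>\<in>B. \<forall>x\<in>I. \<phi> x \<in> I)"

definition large_in :: "('a::ring_1 \<Rightarrow> 'a) set \<Rightarrow> 'a set \<Rightarrow> bool" where
  "large_in B S \<longleftrightarrow>
     (\<forall>I. left_ideal I \<and> B_stable B I \<and> I \<noteq> {0} \<longrightarrow> S \<inter> I \<noteq> {0})"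

definition B_hom :: "('a::ring_1 \<Rightarrow> 'a) set \<Rightarrow> ('a \<Rightarrow> 'a) \<Rightarrow> bool" where
  "B_hom B f \<longleftrightarrow> (\<forall>x y. f (x + y) = f x + f y) \<and> (\<forall>\<phi>\<in>B. \<forall>x. f (\<phi> x) = \<phi> (f x))"

definition embeds_into_sub :: "('a::ring_1 \<Rightarrow> 'a) set \<Rightarrow> 'a set \<Rightarrow> bool" where
  "embeds_into_sub B N \<longleftrightarrow> (\<exists>f. B_hom B f \<and> inj f \<and> range f \<subseteq> N)"

text \<open>The factor module A/N: elements are cosets a + N, with induced operations.\<close>
definition coset :: "'a::ring_1 set \<Rightarrow> 'a \<Rightarrow> 'a set" where
  "coset N a = {a + n | n. n \<in> N}"

definition quot_carrier :: "'a::ring_1 set \<Rightarrow> 'a set set" where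
  "quot_carrier N = range (coset N)"

definition quot_add :: "'a::ring_1 set \<Rightarrow> 'a set \<Rightarrow> 'a set" where
  "quot_add C D = {c + d | c d. c \<in> C \<and> d \<in> D}"

definition quot_act :: "'a::ring_1 set \<Rightarrow> ('a \<Rightarrow> 'a) \<Rightarrow> 'a set \<Rightarrow> 'a set" where
  "quot_act N \<phi> C = {\<phi> c + n | c n. c \<in> C \<and> n \<in> N}"

definition embeds_into_quot :: "('a::ring_1 \<Rightarrow> 'a) set \<Rightarrow> 'a set \<Rightarrow> bool" where
  "embeds_into_quot B N \<longleftrightarrow> (\<exists>f. (\<forall>x. f x \<in> quot_carrier N) \<and>
     (\<forall>x y. f (x + y) = quot_add (f x) (f y)) \<and>
     (\<forall>\<phi>\<in>B. \<forall>x. f (\<phi> x) = quot_act N \<phi> (f x)) \<and> inj f)"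

definition critically_compressible :: "('a::ring_1 \<Rightarrow> 'a) set \<Rightarrow> bool" where
  "critically_compressible B \<longleftrightarrow> (\<exists>x::'a. x \<noteq> 0) \<and>
     (\<forall>N. B_submodule B N \<and> N \<noteq> {0} \<longrightarrow> embeds_into_sub B N) \<and>
     (\<forall>N. B_submodule B N \<and> N \<noteq> {0} \<longrightarrow> \<not> embeds_into_quot B N)"

end

theory Submission
  imports Defs
begin

lemma addB:
  assumes "subalgebra_End s B" "\<phi> \<in> B"
  shows "\<phi> (x + y) = \<phi> x + \<phi> y"
proof -
  have "module_hom s s \<phi>" using assms unfolding subalgebra_End_def End_k_def by auto
  then show ?thesis by (rule module_hom.add)
qed

lemma zeroB:
  assumes "subalgebra_End s B" "\<phi> \<in> B"
  shows "\<phi> 0 = 0"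
  using addB[OF assms, of 0 0] by simp

lemma compL:
  assumes "subalgebra_End s B" "Lmaps \<subseteq> B" "\<phi> \<in> B"
  shows "(\<lambda>y. \<phi> (x * y)) \<in> B"
proof -
  have "(\<lambda>y. x * y) \<in> B" using assms(2) unfolding Lmaps_def by auto
  then have "\<phi> \<circ> (\<lambda>y. x * y) \<in> B" using assms(1,3) unfolding subalgebra_End_def by blast
  then show ?thesis by (simp add: comp_def)
qed

lemma inv_mult:
  assumes "subalgebra_End s B" "Lmaps \<subseteq> B" "\<phi> \<in> B" "c \<in> invariants B"
  shows "\<phi> (x * c) = \<phi> x * c"
proof -
  have "(\<lambda>y. \<phi> (x * y)) \<in> B" by (rule compL[OF assms(1-3)])
  then show ?thesis using assms(4) unfolding invariants_def by force
qed

lemma LB: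
  assumes "Lmaps \<subseteq> B" shows "(\<lambda>y. x * y) \<in> B"
  using assms unfolding Lmaps_def by auto

theorem corollary3p5:
  fixes s :: "'k::comm_ring_1 \<Rightarrow> 'a::ring_1 \<Rightarrow> 'a"
    and B :: "('a \<Rightarrow> 'a) set"
  assumes "k_algebra s"
    and "subalgebra_End s B"
    and "Lmaps \<subseteq> B"
    and "invariants B \<subseteq> centre"
  shows "critically_compressible B \<longleftrightarrow>
           is_integral_domain (invariants B) \<and> large_in B (invariants B)"
proof
  assume cc: "critically_compressible B"
  let ?R = "invariants B"
  have sub: "\<exists>c\<in>?R. c \<in> N \<and> (\<forall>x y. x * c = y * c \<longrightarrow> x = y)"
    if NN: "B_submodule B N" "N \<noteq> {0}" for N
  proof -
    obtain f where f: "B_hom B f" "inj f" "range f \<subseteq> N"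
    proof -
      have "embeds_into_sub B N" using cc NN unfolding critically_compressible_def by simp
      then show ?thesis using that unfolding embeds_into_sub_def by (elim exE conjE)
    qed
    have fx: "f x = x * f 1" for x
    proof -
      have "f ((*) x 1) = x * f 1"
        using f(1) LB[OF assms(3), of x] unfolding B_hom_def by blast
      then show ?thesis by simp
    qed
    have "f 1 \<in> ?R" unfolding invariants_def
    proof (intro CollectI ballI)
      fix \<phi> assume p: "\<phi> \<in> B"
      have "\<phi> (f 1) = f (\<phi> 1)" using f(1) p unfolding B_hom_def by simp
      also have "\<dots> = \<phi> 1 * f 1" by (rule fx)
      finally show "\<phi> (f 1) = \<phi> 1 * f 1" .
    qed
    moreover have "f 1 \<in> N" using f(3) by auto
    moreover have "\<forall>x y. x * f 1 = y * f 1 \<longrightarrow> x = y" 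
    proof (intro allI impI)
      fix x y assume "x * f 1 = y * f 1"
      then have "f x = f y" by (simp only: fx[of x] fx[of y])
      then show "x = y" using f(2) injD by metis
    qed
    ultimately show ?thesis by blast
  qed
  have ne: "(1::'a) \<noteq> 0"
  proof
    assume "(1::'a) = 0"
    then have "x = 0" for x :: 'a by (metis mult_1_left mult_zero_left)
    moreover obtain y :: 'a where "y \<noteq> 0" using cc unfolding critically_compressible_def by (elim conjE exE)
    ultimately show False by simp
  qed
  have domain: "is_integral_domain ?R"
    unfolding is_integral_domain_def
  proof (intro conjI ballI impI)
    show "0 \<in> ?R" unfolding invariants_def using zeroB[OF assms(2)] by simp
    show "1 \<in> ?R" unfolding invariants_def by simp
    show "(1::'a) \<noteq> 0" by (rule ne)
    fix a b assume a: "a \<in> ?R" and b: "b \<in> ?R"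
    show "a + b \<in> ?R" using a b addB[OF assms(2)] unfolding invariants_def
      by (simp add: distrib_left)
    show "a * b \<in> ?R" unfolding invariants_def
    proof (intro CollectI ballI)
      fix \<phi> assume p: "\<phi> \<in> B"
      have "\<phi> (a * b) = \<phi> a * b" by (rule inv_mult[OF assms(2,3) p b])
      also have "\<dots> = \<phi> 1 * (a * b)" 
      proof -
        have "\<phi> a = \<phi> 1 * a" using a p unfolding invariants_def by blast
        then show ?thesis by (simp add: mult.assoc)
      qed
      finally show "\<phi> (a * b) = \<phi> 1 * (a * b)" .
    qed
    show "a * b = b * a" using a assms(4) unfolding centre_def by auto
  next
    fix a assume a: "a \<in> ?R"
    have "\<phi> (-a) = - \<phi> a" if "\<phi> \<in> B" for \<phi>
      using addB[OF assms(2) that, of a "-a"] zeroB[OF assms(2) that]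
      by (metis add.commute add_eq_0_iff2 neg_eq_iff_add_eq_0)
    then show "- a \<in> ?R" using a unfolding invariants_def by simp
  next
    fix a b assume a: "a \<in> ?R" and b: "b \<in> ?R" and ab: "a * b = 0"
    show "a = 0 \<or> b = 0"
    proof (rule ccontr)
      assume "\<not> (a = 0 \<or> b = 0)"
      then have a0: "a \<noteq> 0" and b0: "b \<noteq> 0" by auto
      let ?K = "{x. x * a = 0}"
      have bK: "b \<in> ?K" using ab a assms(4) unfolding centre_def by auto
      have "B_submodule B ?K" unfolding B_submodule_def
      proof (intro conjI ballI)
        fix x y assume "x \<in> ?K" "y \<in> ?K"
        then show "x + y \<in> ?K" by (simp add: distrib_right)
      next
        fix x assume "x \<in> ?K" then show "- x \<in> ?K" by simp
      next
        fix \<phi> x assume "\<phi> \<in> B" "x \<in> ?K"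
        then have "\<phi> x * a = \<phi> (x * a)" using inv_mult[OF assms(2,3) _ a, of \<phi> x] by simp
        also have "\<dots> = 0" using \<open>x \<in> ?K\<close> zeroB[OF assms(2) \<open>\<phi> \<in> B\<close>] by simp
        finally show "\<phi> x \<in> ?K" by simp
      qed simp
      moreover have "?K \<noteq> {0}" using bK b0 by blast
      ultimately obtain c where c: "c \<in> ?R" "c * a = 0" "\<forall>x y. x * c = y * c \<longrightarrow> x = y"
        using sub by blast
      have "a * c = 0 * c" using c(1,2) assms(4) unfolding centre_def by auto
      then show False using c(3) a0 by blast
    qed
  qed
  have "large_in B ?R" unfolding large_in_def
  proof (intro allI impI)
    fix I assume I: "left_ideal I \<and> B_stable B I \<and> I \<noteq> {0}"
    then have "B_submodule B I" unfolding B_submodule_def left_ideal_def B_stable_def by blast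
    then obtain c where c: "c \<in> ?R" "c \<in> I" "\<forall>x y. x * c = y * c \<longrightarrow> x = y"
      using sub I by blast
    have "c \<noteq> 0" using c(3) ne by (metis mult_1_left mult_zero_left)
    then show "?R \<inter> I \<noteq> {0}" using c by blast
  qed
  then show "is_integral_domain ?R \<and> large_in B ?R" using domain by blast
next
  assume H: "is_integral_domain (invariants B) \<and> large_in B (invariants B)"
  let ?R = "invariants B"
  have dom: "is_integral_domain ?R" and lg: "large_in B ?R" using H by auto
  have ne: "(1::'a) \<noteq> 0" using dom unfolding is_integral_domain_def by (elim conjE)
  have sm: "left_ideal N \<and> B_stable B N" if "B_submodule B N" for N
  proof -
    have "a * x \<in> N" if "x \<in> N" for a x
      using \<open>B_submodule B N\<close> LB[OF assms(3), of a] that unfolding B_submodule_def by blast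
    then show ?thesis using that unfolding B_submodule_def left_ideal_def B_stable_def by (intro conjI; elim conjE; assumption?; blast)
  qed
  have big: "\<exists>d\<in>?R. d \<in> N \<and> d \<noteq> 0" if "B_submodule B N" "N \<noteq> {0}" for N
  proof -
    have "?R \<inter> N \<noteq> {0}" using lg sm[OF that(1)] that(2) unfolding large_in_def by simp
    moreover have "0 \<in> ?R \<inter> N" using that(1) zeroB[OF assms(2)] unfolding B_submodule_def invariants_def by simp
    ultimately obtain d where "d \<in> ?R \<inter> N" "d \<noteq> 0" by blast
    then show ?thesis by blast
  qed
  show "critically_compressible B" unfolding critically_compressible_def
  proof (intro conjI allI impI)
    show "\<exists>x::'a. x \<noteq> 0" using ne by blast
  next
    fix N assume N: "B_submodule B N \<and> N \<noteq> {0}"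
    then obtain c where c: "c \<in> ?R" "c \<in> N" "c \<noteq> 0" using big by blast
    let ?I = "{x. x * c = 0}"
    have "?I = {0}"
    proof (rule ccontr)
      assume "?I \<noteq> {0}"
      moreover have "B_submodule B ?I" unfolding B_submodule_def
      proof (intro conjI ballI)
        fix x y assume "x \<in> ?I" "y \<in> ?I"
        then show "x + y \<in> ?I" by (simp add: distrib_right)
      next
        fix x assume "x \<in> ?I" then show "- x \<in> ?I" by simp
      next
        fix \<phi> x assume "\<phi> \<in> B" "x \<in> ?I"
        then have "\<phi> x * c = \<phi> (x * c)" using inv_mult[OF assms(2,3) _ c(1), of \<phi> x] by simp
        also have "\<dots> = 0" using \<open>x \<in> ?I\<close> zeroB[OF assms(2) \<open>\<phi> \<in> B\<close>] by simp
        finally show "\<phi> x \<in> ?I" by simp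
      qed simp
      ultimately obtain d where "d \<in> ?R" "d * c = 0" "d \<noteq> 0" using big by blast
      moreover have "\<forall>a\<in>?R. \<forall>b\<in>?R. a * b = 0 \<longrightarrow> a = 0 \<or> b = 0"
        using dom unfolding is_integral_domain_def by (elim conjE)
      ultimately show False using c(1,3) by blast
    qed
    then have injc: "x * c = y * c \<Longrightarrow> x = y" for x y
    proof -
      assume "x * c = y * c"
      then have "(x - y) * c = 0" by (simp add: left_diff_distrib)
      then have "x - y \<in> ?I" by simp
      then have "x - y = 0" using \<open>?I = {0}\<close> by blast
      then show "x = y" by simp
    qed
    have "B_hom B (\<lambda>x. x * c)" unfolding B_hom_def
      using inv_mult[OF assms(2,3) _ c(1)] by (simp add: distrib_right)
    moreover have "inj (\<lambda>x. x * c)" using injc by (rule injI)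
    moreover have "range (\<lambda>x. x * c) \<subseteq> N" using sm[of N] N c(2) unfolding left_ideal_def by auto
    ultimately show "embeds_into_sub B N" unfolding embeds_into_sub_def by blast
  next
    fix N assume N: "B_submodule B N \<and> N \<noteq> {0}"
    show "\<not> embeds_into_quot B N"
    proof
      assume "embeds_into_quot B N"
      then obtain f where f: "\<forall>x. f x \<in> quot_carrier N"
        "\<forall>\<phi>\<in>B. \<forall>x. f (\<phi> x) = quot_act N \<phi> (f x)" "inj f"
        unfolding embeds_into_quot_def by blast
      obtain d where d: "d \<in> ?R" "d \<in> N" "d \<noteq> 0" using big N by blast
      have dc: "d * z = z * d" for z using d(1) assms(4) unfolding centre_def by auto
      obtain c0 where c0: "f 1 = coset N c0" using f(1) unfolding quot_carrier_def by auto
      have li: "left_ideal N" using sm N by blast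
      have Nz: "0 \<in> N" using li unfolding left_ideal_def by blast
      have q: "quot_act N (\<lambda>y. x * y) (coset N c0) = N" if "x * c0 \<in> N" "\<forall>m\<in>N. x * m \<in> N" for x
      proof
        show "quot_act N (\<lambda>y. x * y) (coset N c0) \<subseteq> N"
          unfolding quot_act_def coset_def
        proof clarify
          fix m n assume "m \<in> N" "n \<in> N"
          then show "x * (c0 + m) + n \<in> N" using that li unfolding left_ideal_def
            by (simp add: distrib_left)
        qed
      next
        show "N \<subseteq> quot_act N (\<lambda>y. x * y) (coset N c0)"
        proof
          fix n assume n: "n \<in> N"
          have "- (x * c0) + n \<in> N" using li that(1) n unfolding left_ideal_def by blast
          moreover have "c0 \<in> coset N c0" unfolding coset_def using Nz by force
          moreover have "n = x * c0 + (- (x * c0) + n)" by simp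
          ultimately show "n \<in> quot_act N (\<lambda>y. x * y) (coset N c0)"
            unfolding quot_act_def by blast
        qed
      qed
      have "f d = f (d * 1)" by simp
      also have "\<dots> = quot_act N (\<lambda>y. d * y) (coset N c0)"
      proof -
        have "f ((\<lambda>y. d * y) 1) = quot_act N (\<lambda>y. d * y) (f 1)"
          using f(2) LB[OF assms(3), of d] by blast
        then show ?thesis using c0 by simp
      qed
      also have "\<dots> = N"
      proof (rule q)
        have "c0 * d \<in> N" using li d(2) unfolding left_ideal_def by blast
        then show "d * c0 \<in> N" by (simp only: dc)
        show "\<forall>m\<in>N. d * m \<in> N" using li unfolding left_ideal_def by blast
      qed
      also have "\<dots> = quot_act N (\<lambda>y. 0 * y) (coset N c0)"
        by (rule q[symmetric]) (use Nz in auto)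
      also have "\<dots> = f (0 * 1)"
      proof -
        have "f ((\<lambda>y. 0 * y) 1) = quot_act N (\<lambda>y. 0 * y) (f 1)"
          using f(2) LB[OF assms(3), of 0] by blast
        then show ?thesis using c0 by simp
      qed
      finally have "f d = f 0" by simp
      then show False using f(3) d(3) by (meson injD)
    qed
  qed
qed

end
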